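(* Let $P(D)=\sum_{|\alpha|\le m}a_\alpha\partial^\alpha$ be a partial differential operator with constant coefficients $a_\alpha\in\mathbb C$ on $\Omega=(0,1)^n$. Then $P(D)$ is an $L_h$-Fourier multiplier for every $h\in\mathbb R^n_+$.
   Context: $\mathbb R^n_+=\{h\in\mathbb R^n: h_j>0\ \forall j\}$. For $h\in\mathbb R^n_+$, $L_h$ is the Laplacian on $\Omega=(0,1)^n$ with boundary conditions $h_jf(x)|_{x_j=0}=f(x)|_{x_j=1}$, $h_j\partial_{x_j}f(x)|_{x_j=0}=\partial_{x_j}f(x)|_{x_j=1}$, $j=1,\dots,n$. With $h^x=\prod_jh_j^{x_j}$, its eigenfunctions are $u_\xi(x)=h^xe^{2\pi i\xi\cdot x}$, $\xi\in\mathbb Z^n$, with biorthogonal system $v_\xi(x)=h^{-x}e^{2\pi i\xi\cdot x}$. $C_{L_h}^\infty(\Omega)$ is the space of $f\in L^2(\Omega)$ with $\Delta^kf\in L^2(\Omega)$ satisfying the boundary conditions for all $k$; the $L_h$-Fourier transform is $\widehat f(\xi)=\int_\Omega f\overline{v_\xi}\,dx$. A continuous linear operator $A:C_{L_h}^\infty(\Omega)\to C_{L_h}^\infty(\Omega)$ is an $L_h$-Fourier multiplier if there is $\sigma:\mathbb Z^n\to\mathbb C$ with $\widehat{Af}(\xi)=\sigma(\xi)\widehat f(\xi)$ for all $f\in C_{L_h}^\infty(\Omega)$ and $\xi\in\mathbb Z^n$; equivalently its $L_h$-symbol $\sigma_A(x,\xi)=u_\xi(x)^{-1}(Au_\xi)(x)$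 does not depend on $x$. *)

theory Defs
  imports "HOL-Analysis.Analysis"
begin

text \<open>Setting: \<Omega> = (0,1)^n is modelled as box 0 1 in real^'n (its closure cbox 0 1);
  functions on \<Omega> are modelled as functions real^'n \<Rightarrow> complex vanishing outside cbox 0 1.\<close>

definition pd :: "'n::finite \<Rightarrow> (real^'n \<Rightarrow> complex) \<Rightarrow> real^'n \<Rightarrow> complex" where
  "pd j f x = (if x \<in> cbox 0 1 then
      vector_derivative (\<lambda>t. f (x + t *\<^sub>R axis j 1)) (at 0 within {t. x + t *\<^sub>R axis j 1 \<in> cbox 0 1})
    else 0)"

definition pds :: "'n::finite list \<Rightarrow> (real^'n \<Rightarrow> complex) \<Rightarrow> real^'n \<Rightarrow> complex" where
  "pds js f = foldr pd js f"

definition coord_list :: "'n::finite list" where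
  "coord_list = (SOME xs. distinct xs \<and> set xs = UNIV)"

definition dpow :: "('n::finite \<Rightarrow> nat) \<Rightarrow> (real^'n \<Rightarrow> complex) \<Rightarrow> real^'n \<Rightarrow> complex" where
  "dpow \<alpha> f = foldr (\<lambda>j g. (pd j ^^ \<alpha> j) g) coord_list f"

definition lap :: "(real^'n::finite \<Rightarrow> complex) \<Rightarrow> real^'n \<Rightarrow> complex" where
  "lap f = (\<lambda>x. \<Sum>j\<in>UNIV. pd j (pd j f) x)"

definition smooth_cube :: "(real^'n::finite \<Rightarrow> complex) \<Rightarrow> bool" where
  "smooth_cube f \<longleftrightarrow> (\<forall>js. continuous_on (cbox 0 1) (pds js f) \<and>
     (\<forall>j. \<forall>x\<in>cbox 0 1.
        ((\<lambda>t. pds js f (x + t *\<^sub>R axis j 1)) has_vector_derivative pd j (pds js f) x)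
          (at 0 within {t. x + t *\<^sub>R axis j 1 \<in> cbox 0 1})))"

definition Lh_bc :: "real^'n::finite \<Rightarrow> (real^'n \<Rightarrow> complex) \<Rightarrow> bool" where
  "Lh_bc h g \<longleftrightarrow> (\<forall>j. \<forall>x\<in>cbox 0 1. x $ j = 0 \<longrightarrow>
      complex_of_real (h $ j) * g x = g (x + axis j 1) \<and>
      complex_of_real (h $ j) * pd j g x = pd j g (x + axis j 1))"

definition CLh :: "real^'n::finite \<Rightarrow> (real^'n \<Rightarrow> complex) set" where
  "CLh h = {f. (\<forall>x. x \<notin> cbox 0 1 \<longrightarrow> f x = 0) \<and> smooth_cube f \<and>
              (\<forall>k. Lh_bc h ((lap ^^ k) f))}"

definition hpow :: "real^'n::finite \<Rightarrow> real^'n \<Rightarrow> real" where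
  "hpow h x = (\<Prod>j\<in>UNIV. (h $ j) powr (x $ j))"

definition u_Lh :: "real^'n::finite \<Rightarrow> int^'n \<Rightarrow> real^'n \<Rightarrow> complex" where
  "u_Lh h \<xi> x = complex_of_real (hpow h x) * cis (2 * pi * (\<Sum>j\<in>UNIV. of_int (\<xi> $ j) * x $ j))"

definition v_Lh :: "real^'n::finite \<Rightarrow> int^'n \<Rightarrow> real^'n \<Rightarrow> complex" where
  "v_Lh h \<xi> x = complex_of_real (hpow h (- x)) * cis (2 * pi * (\<Sum>j\<in>UNIV. of_int (\<xi> $ j) * x $ j))"

definition FT_Lh :: "real^'n::finite \<Rightarrow> (real^'n \<Rightarrow> complex) \<Rightarrow> int^'n \<Rightarrow> complex" where
  "FT_Lh h f \<xi> = integral (box 0 1) (\<lambda>x. f x * cnj (v_Lh h \<xi> x))"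

text \<open>Seminorms defining the Frechet topology of C^\<infinity>_{L_h}(\<Omega>):
  sup over the closed cube of all partial derivatives of order \<le> k.\<close>
definition seminorm_k :: "nat \<Rightarrow> (real^'n::finite \<Rightarrow> complex) \<Rightarrow> real" where
  "seminorm_k k f = Sup {norm (pds js f x) | js x. length js \<le> k \<and> x \<in> cbox 0 1}"

definition Lh_multiplier :: "real^'n::finite \<Rightarrow> ((real^'n \<Rightarrow> complex) \<Rightarrow> (real^'n \<Rightarrow> complex)) \<Rightarrow> bool" where
  "Lh_multiplier h A \<longleftrightarrow>
     (\<forall>f\<in>CLh h. A f \<in> CLh h) \<and>
     (\<forall>f\<in>CLh h. \<forall>g\<in>CLh h. A (\<lambda>x. f x + g x) = (\<lambda>x. A f x + A g x)) \<and>
     (\<forall>f\<in>CLh h. \<forall>c. A (\<lambda>x. c * f x) = (\<lambda>x. c * A f x)) \<and>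
     (\<forall>k. \<exists>k' C. \<forall>f\<in>CLh h. seminorm_k k (A f) \<le> C * seminorm_k k' f) \<and>
     (\<exists>\<sigma>::int^'n \<Rightarrow> complex. \<forall>f\<in>CLh h. \<forall>\<xi>. FT_Lh h (A f) \<xi> = \<sigma> \<xi> * FT_Lh h f \<xi>)"

definition PDO :: "nat \<Rightarrow> (('n::finite \<Rightarrow> nat) \<Rightarrow> complex) \<Rightarrow> (real^'n \<Rightarrow> complex) \<Rightarrow> real^'n \<Rightarrow> complex" where
  "PDO m a f = (\<lambda>x. \<Sum>\<alpha>\<in>{\<alpha>. (\<Sum>j\<in>UNIV. \<alpha> j) \<le> m}. a \<alpha> * dpow \<alpha> f x)"

end

theory Submission
  imports Defs
begin

lemma line_set:
  fixes x :: "real^'n::finite"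
  assumes "x \<in> cbox 0 1"
  shows "{t. x + t *\<^sub>R axis j 1 \<in> cbox 0 1} = {-(x$j)..1 - x$j}"
  using assms by (auto simp: mem_box_cart axis_def)

lemma mvt_bound:
  fixes \<phi> :: "real \<Rightarrow> complex"
  assumes d: "\<And>u. u \<in> closed_segment 0 p \<Longrightarrow> (\<phi> has_vector_derivative \<phi>' u) (at u within closed_segment 0 p)"
    and b: "\<And>u. u \<in> closed_segment 0 p \<Longrightarrow> norm (\<phi>' u) \<le> B"
  shows "norm (\<phi> p - \<phi> 0) \<le> B * \<bar>p\<bar>"
proof -
  have "norm (\<phi> p - \<phi> 0) \<le> B * norm (p - 0)"
  proof (rule differentiable_bound[where f'="\<lambda>u h. h *\<^sub>R \<phi>' u"])
    show "convex (closed_segment 0 p)" by simp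
    show "(\<phi> has_derivative (\<lambda>h. h *\<^sub>R \<phi>' u)) (at u within closed_segment 0 p)" if "u \<in> closed_segment 0 p" for u
      using d[OF that] by (simp add: has_vector_derivative_def)
    show "onorm (\<lambda>h. h *\<^sub>R \<phi>' u) \<le> B" if "u \<in> closed_segment 0 p" for u
      using b[OF that] by (simp add: onorm_scaleR_left[OF bounded_linear_ident] onorm_id)
  qed auto
  then show ?thesis by simp
qed

definition Dl :: "(real^'n::finite \<Rightarrow> complex) \<Rightarrow> bool" where
  "Dl g \<longleftrightarrow> (\<forall>j. \<forall>x\<in>cbox 0 1. ((\<lambda>t. g (x + t *\<^sub>R axis j 1)) has_vector_derivative pd j g x)
        (at 0 within {t. x + t *\<^sub>R axis j 1 \<in> cbox 0 1}))"

lemma cube_coord: "x \<in> cbox 0 (1::real^'n::finite) \<Longrightarrow> 0 \<le> x$j \<and> x$j \<le> 1"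
  by (simp add: mem_box_cart)

lemma Dl_D:
  assumes "Dl g" "x \<in> cbox 0 1"
  shows "((\<lambda>t. g (x + t *\<^sub>R axis j 1)) has_vector_derivative pd j g x) (at 0 within {-(x$j)..1-x$j})"
  using assms by (simp add: Dl_def line_set)

lemma pd_eqI:
  fixes g :: "real^'n::finite \<Rightarrow> complex"
  assumes "x \<in> cbox 0 1"
    and "((\<lambda>t. g (x + t *\<^sub>R axis j 1)) has_vector_derivative D) (at 0 within {-(x$j)..1-x$j})"
  shows "pd j g x = D"
proof -
  have "0 \<le> x$j" "x$j \<le> 1" using cube_coord[OF assms(1)] by auto
  then show ?thesis
    unfolding pd_def using assms line_set[OF assms(1)]
    by (auto intro!: vector_derivative_within_closed_interval)
qed

lemma pd_outside: "x \<notin> cbox 0 1 \<Longrightarrow> pd j g x = 0"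
  by (simp add: pd_def)

lemma DlI:
  assumes "\<And>j x. x \<in> cbox 0 1 \<Longrightarrow> ((\<lambda>t. g (x + t *\<^sub>R axis j 1)) has_vector_derivative pd j g x) (at 0 within {-(x$j)..1-x$j})"
  shows "Dl g"
  using assms by (simp add: Dl_def line_set)

lemma pd_add:
  assumes "Dl f" "Dl g"
  shows "pd j (\<lambda>x. f x + g x) = (\<lambda>x. pd j f x + pd j g x)"
proof
  fix x show "pd j (\<lambda>x. f x + g x) x = pd j f x + pd j g x"
  proof (cases "x \<in> cbox 0 1")
    case True
    show ?thesis
      by (rule pd_eqI[OF True]) (intro has_vector_derivative_add Dl_D assms True)
  qed (simp add: pd_outside)
qed

lemma pd_cmult:
  assumes "Dl g"
  shows "pd j (\<lambda>x. c * g x) = (\<lambda>x. c * pd j g x)"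
proof
  fix x show "pd j (\<lambda>x. c * g x) x = c * pd j g x"
  proof (cases "x \<in> cbox 0 1")
    case True
    show ?thesis
      by (rule pd_eqI[OF True]) (intro has_vector_derivative_mult_right Dl_D assms True)
  qed (simp add: pd_outside)
qed

lemma pd_zero: "pd j (\<lambda>x. 0) = (\<lambda>x. 0)"
proof
  fix x show "pd j (\<lambda>x. 0) x = 0"
  proof (cases "x \<in> cbox 0 1")
    case True
    show ?thesis
      by (rule pd_eqI[OF True]) (rule has_vector_derivative_const)
  qed (simp add: pd_outside)
qed

lemma Dl_add: "Dl f \<Longrightarrow> Dl g \<Longrightarrow> Dl (\<lambda>x. f x + g x)"
  by (rule DlI) (simp add: pd_add, intro has_vector_derivative_add Dl_D, auto)

lemma Dl_cmult: "Dl g \<Longrightarrow> Dl (\<lambda>x. c * g x)"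
  by (rule DlI) (simp add: pd_cmult, intro has_vector_derivative_mult_right Dl_D, auto)

lemma Dl_zero: "Dl (\<lambda>x. 0)"
  by (rule DlI) (simp add: pd_zero)

lemma line_deriv:
  fixes g :: "real^'n::finite \<Rightarrow> complex"
  assumes "Dl g" "y \<in> cbox 0 1" "r \<in> {-(y$i)..1-y$i}"
  shows "((\<lambda>t. g (y + t *\<^sub>R axis i 1)) has_vector_derivative pd i g (y + r *\<^sub>R axis i 1))
           (at r within {-(y$i)..1-y$i})"
proof -
  let ?z = "y + r *\<^sub>R axis i 1"
  have z: "?z \<in> cbox 0 1" using assms(2,3) by (auto simp: mem_box_cart axis_def)
  have zi: "?z $ i = y$i + r" by (simp add: axis_def)
  have 1: "((\<lambda>t. t - r) has_vector_derivative 1) (at r within {-(y$i)..1-y$i})"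
    by (auto intro!: derivative_eq_intros)
  have im: "(\<lambda>t. t - r) ` {-(y$i)..1-y$i} = {-(?z$i)..1-?z$i}"
    unfolding zi by (auto simp: image_iff intro!: bexI[where x="_ + r"])
  have 2: "((\<lambda>t. g (?z + t *\<^sub>R axis i 1)) has_vector_derivative pd i g ?z) (at ((\<lambda>t. t - r) r) within (\<lambda>t. t - r) ` {-(y$i)..1-y$i})"
    unfolding im using Dl_D[OF assms(1) z, of i] zi by simp
  have "(((\<lambda>t. g (?z + t *\<^sub>R axis i 1)) \<circ> (\<lambda>t. t - r)) has_vector_derivative (1 *\<^sub>R pd i g ?z)) (at r within {-(y$i)..1-y$i})"
    by (rule vector_diff_chain_within[OF 1 2])
  moreover have "((\<lambda>t. g (?z + t *\<^sub>R axis i 1)) \<circ> (\<lambda>t. t - r)) = (\<lambda>t. g (y + t *\<^sub>R axis i 1))"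
    by (rule ext) (simp add: algebra_simps)
  ultimately show ?thesis by simp
qed

lemma pds_Nil[simp]: "pds [] f = f" by (simp add: pds_def)
lemma pds_Cons[simp]: "pds (j # js) f = pd j (pds js f)" by (simp add: pds_def)
lemma pds_append: "pds (a @ b) f = pds a (pds b f)" by (simp add: pds_def)

lemma smooth_cube_iff: "smooth_cube f \<longleftrightarrow> (\<forall>js. continuous_on (cbox 0 1) (pds js f) \<and> Dl (pds js f))"
  by (simp add: smooth_cube_def Dl_def)

inductive_set Sp :: "(real^'n::finite \<Rightarrow> complex) \<Rightarrow> (real^'n \<Rightarrow> complex) set" for f where
  sp_zero: "(\<lambda>x. 0) \<in> Sp f"
| sp_pds: "pds l f \<in> Sp f"
| sp_add: "g \<in> Sp f \<Longrightarrow> k \<in> Sp f \<Longrightarrow> (\<lambda>x. g x + k x) \<in> Sp f"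
| sp_cmult: "g \<in> Sp f \<Longrightarrow> (\<lambda>x. c * g x) \<in> Sp f"

lemma Sp_props:
  assumes f: "smooth_cube f" and g: "g \<in> Sp f"
  shows "Dl g \<and> continuous_on (cbox 0 1) g \<and> (\<forall>j. pd j g \<in> Sp f)"
  using g
proof induction
  case sp_zero
  then show ?case by (simp add: Dl_zero pd_zero Sp.sp_zero)
next
  case (sp_pds l)
  have "pd j (pds l f) \<in> Sp f" for j using Sp.sp_pds[of "j # l" f] by simp
  then show ?case using f unfolding smooth_cube_iff by blast
next
  case (sp_add g k)
  then show ?case by (auto simp: Dl_add pd_add intro!: continuous_intros Sp.sp_add)
next
  case (sp_cmult g c)
  then show ?case by (auto simp: Dl_cmult pd_cmult intro!: continuous_intros Sp.sp_cmult)
qed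

lemma Sp_Dl: "smooth_cube f \<Longrightarrow> g \<in> Sp f \<Longrightarrow> Dl g" using Sp_props by blast
lemma Sp_cont: "smooth_cube f \<Longrightarrow> g \<in> Sp f \<Longrightarrow> continuous_on (cbox 0 1) g" using Sp_props by blast
lemma Sp_pd: "smooth_cube f \<Longrightarrow> g \<in> Sp f \<Longrightarrow> pd j g \<in> Sp f" using Sp_props by blast

lemma Sp_pds: "smooth_cube f \<Longrightarrow> g \<in> Sp f \<Longrightarrow> pds js g \<in> Sp f"
  by (induction js) (auto intro: Sp_pd)

lemma Sp_self: "f \<in> Sp f" using Sp.sp_pds[of "[]" f] by simp

lemma Sp_smooth: "smooth_cube f \<Longrightarrow> g \<in> Sp f \<Longrightarrow> smooth_cube g"
  unfolding smooth_cube_iff[of g] using Sp_pds[of f g] Sp_Dl[of f] Sp_cont[of f] by blast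

lemma Sp_sum:
  assumes "finite A" "\<And>a. a \<in> A \<Longrightarrow> F a \<in> Sp f"
  shows "(\<lambda>x. \<Sum>a\<in>A. F a x) \<in> Sp f"
  using assms
proof (induction A rule: finite_induct)
  case empty then show ?case by (simp add: Sp.sp_zero)
next
  case (insert a A)
  then show ?case by (simp add: Sp.sp_add)
qed

lemma Dl_sum:
  assumes "finite A" "\<And>a. a \<in> A \<Longrightarrow> Dl (F a)"
  shows "Dl (\<lambda>x. \<Sum>a\<in>A. F a x)"
  using assms
proof (induction A rule: finite_induct)
  case empty then show ?case by (simp add: Dl_zero)
next
  case (insert a A)
  then show ?case by (simp add: Dl_add)
qed

lemma pd_sum:
  assumes "finite A" "\<And>a. a \<in> A \<Longrightarrow> Dl (F a)"
  shows "pd j (\<lambda>x. \<Sum>a\<in>A. F a x) = (\<lambda>x. \<Sum>a\<in>A. pd j (F a) x)"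
  using assms
proof (induction A rule: finite_induct)
  case empty then show ?case by (simp add: pd_zero)
next
  case (insert a A)
  then show ?case by (simp add: pd_add Dl_sum)
qed

lemma pds_sum:
  assumes f: "smooth_cube f" and "finite A" "\<And>a. a \<in> A \<Longrightarrow> F a \<in> Sp f"
  shows "pds js (\<lambda>x. \<Sum>a\<in>A. F a x) = (\<lambda>x. \<Sum>a\<in>A. pds js (F a) x)"
proof (induction js)
  case Nil then show ?case by simp
next
  case (Cons j js)
  have "pds (j # js) (\<lambda>x. \<Sum>a\<in>A. F a x) = pd j (\<lambda>x. \<Sum>a\<in>A. pds js (F a) x)"
    using Cons by simp
  also have "\<dots> = (\<lambda>x. \<Sum>a\<in>A. pd j (pds js (F a)) x)"
    by (rule pd_sum[OF assms(2)]) (intro Sp_Dl[OF f] Sp_pds[OF f] assms(3))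
  finally show ?case by simp
qed

lemma pds_cmult:
  assumes f: "smooth_cube f" and "g \<in> Sp f"
  shows "pds js (\<lambda>x. c * g x) = (\<lambda>x. c * pds js g x)"
proof (induction js)
  case Nil then show ?case by simp
next
  case (Cons j js)
  have "Dl (pds js g)" by (intro Sp_Dl[OF f] Sp_pds[OF f] assms(2))
  then show ?case using Cons by (simp add: pd_cmult)
qed

lemma Sp_lap: "smooth_cube f \<Longrightarrow> g \<in> Sp f \<Longrightarrow> lap g \<in> Sp f"
  unfolding lap_def by (rule Sp_sum) (auto intro: Sp_pd)

lemma Sp_lap_pow: "smooth_cube f \<Longrightarrow> g \<in> Sp f \<Longrightarrow> (lap ^^ k) g \<in> Sp f"
  by (induction k) (auto intro: Sp_lap)

lemma Sp_pd_pow: "smooth_cube f \<Longrightarrow> g \<in> Sp f \<Longrightarrow> (pd j ^^ k) g \<in> Sp f"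
  by (induction k) (auto intro: Sp_pd)

lemma Sp_foldr: "smooth_cube f \<Longrightarrow> g \<in> Sp f \<Longrightarrow> foldr (\<lambda>j g. (pd j ^^ \<alpha> j) g) cs g \<in> Sp f"
  by (induction cs) (auto intro: Sp_pd_pow)

lemma Sp_dpow: "smooth_cube f \<Longrightarrow> g \<in> Sp f \<Longrightarrow> dpow \<alpha> g \<in> Sp f"
  unfolding dpow_def by (rule Sp_foldr)

lemma finite_multi: "finite {\<alpha>::'n::finite \<Rightarrow> nat. (\<Sum>j\<in>UNIV. \<alpha> j) \<le> m}"
proof (rule finite_subset)
  show "{\<alpha>::'n \<Rightarrow> nat. (\<Sum>j\<in>UNIV. \<alpha> j) \<le> m} \<subseteq> Pi\<^sub>E UNIV (\<lambda>_. {..m})"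
  proof
    fix \<alpha> :: "'n \<Rightarrow> nat" assume "\<alpha> \<in> {\<alpha>. (\<Sum>j\<in>UNIV. \<alpha> j) \<le> m}"
    then have "\<alpha> j \<le> m" for j
      using member_le_sum[of j UNIV \<alpha>] by auto
    then show "\<alpha> \<in> Pi\<^sub>E UNIV (\<lambda>_. {..m})" by (simp add: PiE_UNIV_domain)
  qed
  show "finite (Pi\<^sub>E UNIV (\<lambda>_. {..m}) :: ('n \<Rightarrow> nat) set)"
    by (rule finite_PiE) auto
qed

lemma Sp_PDO: "smooth_cube f \<Longrightarrow> g \<in> Sp f \<Longrightarrow> PDO m a g \<in> Sp f"
  unfolding PDO_def by (rule Sp_sum[OF finite_multi]) (auto intro: Sp.sp_cmult Sp_dpow)

lemma pds_outside: "(\<forall>x. x \<notin> cbox 0 1 \<longrightarrow> f x = 0) \<Longrightarrow> x \<notin> cbox 0 1 \<Longrightarrow> pds l f x = 0"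
  by (cases l) (auto simp: pd_outside)

lemma Sp_outside:
  assumes "\<forall>x. x \<notin> cbox 0 1 \<longrightarrow> f x = 0" "g \<in> Sp f" "x \<notin> cbox 0 1"
  shows "g x = 0"
  using assms(2)
proof induction
  case (sp_pds l) then show ?case using pds_outside[OF assms(1) assms(3)] by simp
qed (auto)

lemma in_line_int:
  fixes y :: "real^'n::finite"
  assumes "y \<in> cbox 0 1" "y + r *\<^sub>R axis k 1 \<in> cbox 0 1"
  shows "r \<in> {-(y$k)..1-y$k}"
  using line_set[OF assms(1), of k] assms(2) by blast

lemma rect_bound:
  fixes g :: "real^'n::finite \<Rightarrow> complex"
  assumes Dg: "Dl g" and Dig: "Dl (pd i g)" and ij: "i \<noteq> j"
    and R: "\<And>u t. u \<in> closed_segment 0 p \<Longrightarrow> t \<in> closed_segment 0 q \<Longrightarrow>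
              x + u *\<^sub>R axis i 1 + t *\<^sub>R axis j 1 \<in> cbox 0 1"
    and B: "\<And>u t. u \<in> closed_segment 0 p \<Longrightarrow> t \<in> closed_segment 0 q \<Longrightarrow>
              norm (pd j (pd i g) (x + u *\<^sub>R axis i 1 + t *\<^sub>R axis j 1) - K) \<le> \<epsilon>"
  shows "norm (g (x + q *\<^sub>R axis j 1 + p *\<^sub>R axis i 1) - g (x + p *\<^sub>R axis i 1)
               - g (x + q *\<^sub>R axis j 1) + g x - (p * q) *\<^sub>R K) \<le> \<epsilon> * \<bar>q\<bar> * \<bar>p\<bar>"
proof -
  have inner: "norm (pd i g (x + u *\<^sub>R axis i 1 + q *\<^sub>R axis j 1) - q *\<^sub>R K - pd i g (x + u *\<^sub>R axis i 1)) \<le> \<epsilon> * \<bar>q\<bar>"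
    if u: "u \<in> closed_segment 0 p" for u
  proof -
    let ?y = "x + u *\<^sub>R axis i 1"
    have y: "?y \<in> cbox 0 1" using R[OF u, of 0] by simp
    let ?\<psi> = "\<lambda>t. pd i g (?y + t *\<^sub>R axis j 1) - t *\<^sub>R K"
    have "norm (?\<psi> q - ?\<psi> 0) \<le> \<epsilon> * \<bar>q\<bar>"
    proof (rule mvt_bound)
      fix t assume t: "t \<in> closed_segment 0 q"
      have sub: "closed_segment 0 q \<subseteq> {-(?y$j)..1-?y$j}"
        using R[OF u] in_line_int[OF y] by blast
      have "((\<lambda>t. pd i g (?y + t *\<^sub>R axis j 1)) has_vector_derivative pd j (pd i g) (?y + t *\<^sub>R axis j 1))
              (at t within {-(?y$j)..1-?y$j})"
        by (rule line_deriv[OF Dig y]) (use sub t in blast)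
      then have "((\<lambda>t. pd i g (?y + t *\<^sub>R axis j 1)) has_vector_derivative pd j (pd i g) (?y + t *\<^sub>R axis j 1))
              (at t within closed_segment 0 q)"
        by (rule has_vector_derivative_within_subset[OF _ sub])
      then show "(?\<psi> has_vector_derivative (pd j (pd i g) (?y + t *\<^sub>R axis j 1) - K)) (at t within closed_segment 0 q)"
        by (auto intro!: derivative_eq_intros)
      show "norm (pd j (pd i g) (?y + t *\<^sub>R axis j 1) - K) \<le> \<epsilon>" using B[OF u t] by simp
    qed
    then show ?thesis by (simp add: algebra_simps)
  qed
  let ?\<phi> = "\<lambda>u. g (x + q *\<^sub>R axis j 1 + u *\<^sub>R axis i 1) - g (x + u *\<^sub>R axis i 1) - (u * q) *\<^sub>R K"
  have "norm (?\<phi> p - ?\<phi> 0) \<le> (\<epsilon> * \<bar>q\<bar>) * \<bar>p\<bar>"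
  proof (rule mvt_bound)
    fix u assume u: "u \<in> closed_segment 0 p"
    have x: "x \<in> cbox 0 1" using R[of 0 0] by simp
    have xq: "x + q *\<^sub>R axis j 1 \<in> cbox 0 1" using R[of 0 q] by simp
    have sub1: "closed_segment 0 p \<subseteq> {-(x$i)..1-x$i}"
      using R[of _ 0] in_line_int[OF x] by fastforce
    have sub2: "closed_segment 0 p \<subseteq> {-((x + q *\<^sub>R axis j 1)$i)..1-(x + q *\<^sub>R axis j 1)$i}"
    proof
      fix v assume v: "v \<in> closed_segment 0 p"
      have "x + q *\<^sub>R axis j 1 + v *\<^sub>R axis i 1 \<in> cbox 0 1"
        using R[OF v, of q] by (simp add: algebra_simps)
      then show "v \<in> {-((x + q *\<^sub>R axis j 1)$i)..1-(x + q *\<^sub>R axis j 1)$i}"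
        using in_line_int[OF xq] by blast
    qed
    have d1: "((\<lambda>u. g (x + u *\<^sub>R axis i 1)) has_vector_derivative pd i g (x + u *\<^sub>R axis i 1)) (at u within closed_segment 0 p)"
      by (rule has_vector_derivative_within_subset[OF line_deriv[OF Dg x] sub1]) (use sub1 u in blast)
    have d2: "((\<lambda>u. g (x + q *\<^sub>R axis j 1 + u *\<^sub>R axis i 1)) has_vector_derivative pd i g (x + q *\<^sub>R axis j 1 + u *\<^sub>R axis i 1)) (at u within closed_segment 0 p)"
      by (rule has_vector_derivative_within_subset[OF line_deriv[OF Dg xq] sub2]) (use sub2 u in blast)
    show "(?\<phi> has_vector_derivative (pd i g (x + q *\<^sub>R axis j 1 + u *\<^sub>R axis i 1) - pd i g (x + u *\<^sub>R axis i 1) - q *\<^sub>R K)) (at u within closed_segment 0 p)"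
      using d1 d2 by (auto intro!: derivative_eq_intros)
    have e: "x + q *\<^sub>R axis j 1 + u *\<^sub>R axis i 1 = x + u *\<^sub>R axis i 1 + q *\<^sub>R axis j 1"
      by (simp add: algebra_simps)
    show "norm (pd i g (x + q *\<^sub>R axis j 1 + u *\<^sub>R axis i 1) - pd i g (x + u *\<^sub>R axis i 1) - q *\<^sub>R K) \<le> \<epsilon> * \<bar>q\<bar>"
      using inner[OF u] unfolding e by (simp add: algebra_simps)
  qed
  then show ?thesis by (simp add: algebra_simps)
qed

lemma norm_two_axis: "norm (u *\<^sub>R axis i (1::real) + t *\<^sub>R axis j 1 :: real^'n::finite) \<le> \<bar>u\<bar> + \<bar>t\<bar>"
proof -
  have "norm (u *\<^sub>R axis i (1::real) + t *\<^sub>R axis j 1 :: real^'n::finite) \<le> norm (u *\<^sub>R axis i (1::real) :: real^'n) + norm (t *\<^sub>R axis j (1::real) :: real^'n)"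
    by (rule norm_triangle_ineq)
  also have "\<dots> = \<bar>u\<bar> + \<bar>t\<bar>" by simp
  finally show ?thesis .
qed

lemma schwarz_pt:
  fixes g :: "real^'n::finite \<Rightarrow> complex"
  assumes Dg: "Dl g" and Dig: "Dl (pd i g)" and Djg: "Dl (pd j g)"
    and c1: "continuous_on (cbox 0 1) (pd j (pd i g))"
    and c2: "continuous_on (cbox 0 1) (pd i (pd j g))"
    and x: "x \<in> cbox 0 1"
  shows "pd j (pd i g) x = pd i (pd j g) x"
proof (cases "i = j")
  case True then show ?thesis by simp
next
  case ij: False
  have small: "norm (pd j (pd i g) x - pd i (pd j g) x) \<le> 2 * \<epsilon>" if e: "\<epsilon> > 0" for \<epsilon>
  proof -
    obtain d1 where d1: "d1 > 0" "\<And>x'. x' \<in> cbox 0 1 \<Longrightarrow> dist x' x < d1 \<Longrightarrow> dist (pd j (pd i g) x') (pd j (pd i g) x) < \<epsilon>"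
      using c1 x e unfolding continuous_on_iff by blast
    obtain d2 where d2: "d2 > 0" "\<And>x'. x' \<in> cbox 0 1 \<Longrightarrow> dist x' x < d2 \<Longrightarrow> dist (pd i (pd j g) x') (pd i (pd j g) x) < \<epsilon>"
      using c2 x e unfolding continuous_on_iff by blast
    define r where "r = min (1/2) (min d1 d2 / 3)"
    have r: "r > 0" "r \<le> 1/2" "2 * r < d1" "2 * r < d2" using d1 d2 by (auto simp: r_def)
    define p where "p = (if x$i \<le> 1/2 then r else -r)"
    define q where "q = (if x$j \<le> 1/2 then r else -r)"
    have absp: "\<bar>p\<bar> = r" and absq: "\<bar>q\<bar> = r" using r by (auto simp: p_def q_def)
    have segp: "\<bar>u\<bar> \<le> r \<and> 0 \<le> x$i + u \<and> x$i + u \<le> 1" if "u \<in> closed_segment 0 p" for u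
      using that r cube_coord[OF x, of i]
      by (auto simp: p_def closed_segment_eq_real_ivl split: if_splits)
    have segq: "\<bar>t\<bar> \<le> r \<and> 0 \<le> x$j + t \<and> x$j + t \<le> 1" if "t \<in> closed_segment 0 q" for t
      using that r cube_coord[OF x, of j]
      by (auto simp: q_def closed_segment_eq_real_ivl split: if_splits)
    have inC: "x + u *\<^sub>R axis i 1 + t *\<^sub>R axis j 1 \<in> cbox 0 1"
      if "u \<in> closed_segment 0 p" "t \<in> closed_segment 0 q" for u t
      using segp[OF that(1)] segq[OF that(2)] x ij
      unfolding mem_box_cart by (auto simp: axis_def)
    have near: "dist (x + u *\<^sub>R axis i 1 + t *\<^sub>R axis j 1) x \<le> 2 * r"
      if "u \<in> closed_segment 0 p" "t \<in> closed_segment 0 q" for u t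
    proof -
      have "dist (x + u *\<^sub>R axis i 1 + t *\<^sub>R axis j 1) x = norm (u *\<^sub>R axis i (1::real) + t *\<^sub>R axis j 1 :: real^'n)"
        by (simp add: dist_norm)
      also have "\<dots> \<le> \<bar>u\<bar> + \<bar>t\<bar>" by (rule norm_two_axis)
      finally show ?thesis using segp[OF that(1)] segq[OF that(2)] by simp
    qed
    have A: "norm (g (x + q *\<^sub>R axis j 1 + p *\<^sub>R axis i 1) - g (x + p *\<^sub>R axis i 1)
               - g (x + q *\<^sub>R axis j 1) + g x - (p * q) *\<^sub>R pd j (pd i g) x) \<le> \<epsilon> * \<bar>q\<bar> * \<bar>p\<bar>"
    proof (rule rect_bound[OF Dg Dig ij])
      fix u t assume ut: "u \<in> closed_segment 0 p" "t \<in> closed_segment 0 q"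
      show "x + u *\<^sub>R axis i 1 + t *\<^sub>R axis j 1 \<in> cbox 0 1" by (rule inC[OF ut])
      show "norm (pd j (pd i g) (x + u *\<^sub>R axis i 1 + t *\<^sub>R axis j 1) - pd j (pd i g) x) \<le> \<epsilon>"
        using d1(2)[OF inC[OF ut]] near[OF ut] r by (simp add: dist_norm)
    qed
    have B: "norm (g (x + p *\<^sub>R axis i 1 + q *\<^sub>R axis j 1) - g (x + q *\<^sub>R axis j 1)
               - g (x + p *\<^sub>R axis i 1) + g x - (q * p) *\<^sub>R pd i (pd j g) x) \<le> \<epsilon> * \<bar>p\<bar> * \<bar>q\<bar>"
    proof (rule rect_bound[OF Dg Djg]) 
      show "j \<noteq> i" using ij by simp
      fix u t assume ut: "u \<in> closed_segment 0 q" "t \<in> closed_segment 0 p"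
      have e: "x + u *\<^sub>R axis j 1 + t *\<^sub>R axis i 1 = x + t *\<^sub>R axis i 1 + u *\<^sub>R axis j 1"
        by (simp add: algebra_simps)
      show "x + u *\<^sub>R axis j 1 + t *\<^sub>R axis i 1 \<in> cbox 0 1" unfolding e by (rule inC[OF ut(2,1)])
      show "norm (pd i (pd j g) (x + u *\<^sub>R axis j 1 + t *\<^sub>R axis i 1) - pd i (pd j g) x) \<le> \<epsilon>"
        unfolding e using d2(2)[OF inC[OF ut(2,1)]] near[OF ut(2,1)] r by (simp add: dist_norm)
    qed
    have e2: "x + p *\<^sub>R axis i 1 + q *\<^sub>R axis j 1 = x + q *\<^sub>R axis j 1 + p *\<^sub>R axis i 1"
      by (simp add: algebra_simps)
    let ?D = "g (x + q *\<^sub>R axis j 1 + p *\<^sub>R axis i 1) - g (x + p *\<^sub>R axis i 1) - g (x + q *\<^sub>R axis j 1) + g x"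
    have A': "norm (?D - (p * q) *\<^sub>R pd j (pd i g) x) \<le> \<epsilon> * (r * r)" using A absp absq by simp
    have B': "norm (?D - (p * q) *\<^sub>R pd i (pd j g) x) \<le> \<epsilon> * (r * r)"
      using B absp absq unfolding e2 by (simp add: algebra_simps)
    have "norm ((p * q) *\<^sub>R (pd j (pd i g) x - pd i (pd j g) x)) \<le> norm (?D - (p * q) *\<^sub>R pd i (pd j g) x) + norm (?D - (p * q) *\<^sub>R pd j (pd i g) x)"
      by (rule order_trans[OF _ norm_triangle_ineq4]) (simp add: algebra_simps)
    also have "\<dots> \<le> 2 * \<epsilon> * (r * r)" using A' B' by simp
    finally have F: "norm ((p * q) *\<^sub>R (pd j (pd i g) x - pd i (pd j g) x)) \<le> 2 * \<epsilon> * (r * r)" .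
    have "norm ((p * q) *\<^sub>R (pd j (pd i g) x - pd i (pd j g) x)) = (r * r) * norm (pd j (pd i g) x - pd i (pd j g) x)"
      by (simp add: abs_mult absp absq)
    with F have "(r * r) * norm (pd j (pd i g) x - pd i (pd j g) x) \<le> (r * r) * (2 * \<epsilon>)"
      by (simp add: algebra_simps)
    then show ?thesis using r by (simp add: mult_le_cancel_left_pos)
  qed
  have "norm (pd j (pd i g) x - pd i (pd j g) x) \<le> 0"
  proof (rule field_le_epsilon)
    fix e :: real assume "0 < e"
    then have "norm (pd j (pd i g) x - pd i (pd j g) x) \<le> 2 * (e/2)" by (intro small) simp
    then show "norm (pd j (pd i g) x - pd i (pd j g) x) \<le> 0 + e" by simp
  qed
  then show ?thesis by simp
qed

lemma pd_comm:
  assumes f: "smooth_cube f" and g: "g \<in> Sp f"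
  shows "pd j (pd i g) = pd i (pd j g)"
proof
  fix x show "pd j (pd i g) x = pd i (pd j g) x"
  proof (cases "x \<in> cbox 0 1")
    case True
    show ?thesis
      by (rule schwarz_pt[OF Sp_Dl[OF f g] Sp_Dl[OF f Sp_pd[OF f g]] Sp_Dl[OF f Sp_pd[OF f g]]
            Sp_cont[OF f Sp_pd[OF f Sp_pd[OF f g]]] Sp_cont[OF f Sp_pd[OF f Sp_pd[OF f g]]] True])
  qed (simp add: pd_outside)
qed

lemma pd_move:
  assumes f: "smooth_cube f" and g: "g \<in> Sp f"
  shows "pd a (pds F g) = pds F (pd a g)"
proof (induction F)
  case Nil then show ?case by simp
next
  case (Cons b F)
  have "pd a (pds (b # F) g) = pd a (pd b (pds F g))" by simp
  also have "\<dots> = pd b (pd a (pds F g))" by (rule pd_comm[OF f Sp_pds[OF f g]])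
  also have "\<dots> = pds (b # F) (pd a g)" using Cons by simp
  finally show ?case .
qed

lemma pds_perm:
  assumes f: "smooth_cube f" and g: "g \<in> Sp f"
  shows "mset js = mset ks \<Longrightarrow> pds js g = pds ks g"
proof (induction js arbitrary: ks)
  case Nil then show ?case by simp
next
  case (Cons a js)
  have "a \<in> set ks" using Cons.prems by (metis list.set_intros(1) set_mset_mset)
  then obtain ks1 ks2 where ks: "ks = ks1 @ a # ks2" by (meson split_list)
  have m: "mset js = mset (ks1 @ ks2)" using Cons.prems ks by simp
  have "pds (a # js) g = pd a (pds (ks1 @ ks2) g)" using Cons.IH[OF m] by simp
  also have "\<dots> = pd a (pds ks1 (pds ks2 g))" by (simp add: pds_append)
  also have "\<dots> = pds ks1 (pd a (pds ks2 g))" by (rule pd_move[OF f Sp_pds[OF f g]])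
  also have "\<dots> = pds ks g" by (simp add: ks pds_append)
  finally show ?case .
qed

definition goodj :: "real^'n::finite \<Rightarrow> 'n \<Rightarrow> (real^'n \<Rightarrow> complex) \<Rightarrow> bool" where
  "goodj h j \<phi> \<longleftrightarrow> (\<forall>x\<in>cbox 0 1. x$j = 0 \<longrightarrow> complex_of_real (h$j) * \<phi> x = \<phi> (x + axis j 1))"

lemma goodj_add: "goodj h j a \<Longrightarrow> goodj h j b \<Longrightarrow> goodj h j (\<lambda>x. a x + b x)"
  by (simp add: goodj_def distrib_left)
lemma goodj_diff: "goodj h j a \<Longrightarrow> goodj h j b \<Longrightarrow> goodj h j (\<lambda>x. a x - b x)"
  by (simp add: goodj_def right_diff_distrib)
lemma goodj_cmult: "goodj h j a \<Longrightarrow> goodj h j (\<lambda>x. c * a x)"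
  by (simp add: goodj_def algebra_simps)
lemma goodj_zero: "goodj h j (\<lambda>x. 0)"
  by (simp add: goodj_def)
lemma goodj_sum:
  assumes "finite A" "\<And>a. a \<in> A \<Longrightarrow> goodj h j (F a)"
  shows "goodj h j (\<lambda>x. \<Sum>a\<in>A. F a x)"
  using assms by (induction A rule: finite_induct) (auto intro: goodj_add goodj_zero)

lemma goodj_tang:
  fixes \<phi> :: "real^'n::finite \<Rightarrow> complex"
  assumes ij: "i \<noteq> j" and G: "goodj h j \<phi>" and D: "Dl \<phi>"
  shows "goodj h j (pd i \<phi>)"
  unfolding goodj_def
proof (intro ballI impI)
  fix x :: "real^'n" assume x: "x \<in> cbox 0 1" and xj: "x$j = 0"
  let ?y = "x + axis j 1"
  have y: "?y \<in> cbox 0 1" using x xj unfolding mem_box_cart by (auto simp: axis_def)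
  have yi: "?y $ i = x $ i" using ij by (simp add: axis_def)
  have d0: "((\<lambda>t. complex_of_real (h$j) * \<phi> (x + t *\<^sub>R axis i 1)) has_vector_derivative complex_of_real (h$j) * pd i \<phi> x)
          (at 0 within {-(?y$i)..1-?y$i})"
    unfolding yi by (intro has_vector_derivative_mult_right Dl_D[OF D x])
  have z: "0 \<in> {-(?y$i)..1-?y$i}" using cube_coord[OF y, of i] by simp
  have eq: "\<phi> (?y + t *\<^sub>R axis i 1) = complex_of_real (h$j) * \<phi> (x + t *\<^sub>R axis i 1)"
    if t: "t \<in> {-(?y$i)..1-?y$i}" for t
  proof -
    have xt: "x + t *\<^sub>R axis i 1 \<in> cbox 0 1" using t yi line_set[OF x, of i] by auto
    have "(x + t *\<^sub>R axis i 1) $ j = 0" using xj ij by (simp add: axis_def)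
    then have "complex_of_real (h$j) * \<phi> (x + t *\<^sub>R axis i 1) = \<phi> (x + t *\<^sub>R axis i 1 + axis j 1)"
      using G xt unfolding goodj_def by blast
    then show ?thesis by (simp add: algebra_simps)
  qed
  have "((\<lambda>t. \<phi> (?y + t *\<^sub>R axis i 1)) has_vector_derivative complex_of_real (h$j) * pd i \<phi> x)
          (at 0 within {-(?y$i)..1-?y$i})"
    by (rule has_vector_derivative_transform[OF z eq d0])
  then show "complex_of_real (h$j) * pd i \<phi> x = pd i \<phi> ?y"
    by (intro pd_eqI[OF y, symmetric])
qed

lemma CLhD:
  assumes "f \<in> CLh h"
  shows "\<forall>x. x \<notin> cbox 0 1 \<longrightarrow> f x = 0" "smooth_cube f" "\<And>k. Lh_bc h ((lap ^^ k) f)"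
  using assms by (auto simp: CLh_def)

lemma Lh_bc_good: "Lh_bc h g \<longleftrightarrow> (\<forall>j. goodj h j g \<and> goodj h j (pd j g))"
  by (auto simp: Lh_bc_def goodj_def)

lemma CLh_lap:
  assumes f: "f \<in> CLh h"
  shows "lap f \<in> CLh h"
proof -
  have sm: "smooth_cube f" using CLhD[OF f] by blast
  have L: "lap f \<in> Sp f" by (rule Sp_lap[OF sm Sp_self])
  have "\<forall>x. x \<notin> cbox 0 1 \<longrightarrow> lap f x = 0" using Sp_outside[OF CLhD(1)[OF f] L] by blast
  moreover have "smooth_cube (lap f)" by (rule Sp_smooth[OF sm L])
  moreover have "Lh_bc h ((lap ^^ k) (lap f))" for k
    using CLhD(3)[OF f, of "Suc k"] by (simp add: funpow_Suc_right del: funpow.simps)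
  ultimately show ?thesis by (simp add: CLh_def)
qed

lemma goodj_pds_tang:
  assumes sm: "smooth_cube f" and g: "g \<in> Sp f" and G: "goodj h j g"
  shows "(\<forall>i\<in>set F. i \<noteq> j) \<Longrightarrow> goodj h j (pds F g)"
proof (induction F)
  case Nil then show ?case using G by simp
next
  case (Cons a F)
  then show ?case using goodj_tang[of a j h "pds F g"] Sp_Dl[OF sm Sp_pds[OF sm g]] by simp
qed

lemma rep_good:
  assumes "f \<in> CLh h"
  shows "goodj h j (pds (replicate k j) f) \<and> goodj h j (pds (replicate (Suc k) j) f)"
  using assms
proof (induction k arbitrary: f)
  case 0
  have "Lh_bc h f" using CLhD(3)[OF 0, of 0] by simp
  then show ?case by (simp add: Lh_bc_good)
next
  case (Suc k)
  note f = Suc.prems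
  have sm: "smooth_cube f" using CLhD[OF f] by blast
  define R where "R = replicate k j"
  define G where "G = pds R f"
  have GS: "G \<in> Sp f" unfolding G_def by (rule Sp_pds[OF sm Sp_self])
  have IHf: "goodj h j G" "goodj h j (pd j G)" using Suc.IH[OF f] by (simp_all add: G_def R_def)
  have IHl: "goodj h j (pds R (lap f))" using Suc.IH[OF CLh_lap[OF f]] by (simp add: R_def)
  have e1: "pds R (pd i (pd i f)) = pd i (pd i G)" for i
  proof -
    have "pds R (pd i (pd i f)) = pds (R @ [i, i]) f" by (simp add: pds_append)
    also have "\<dots> = pds ([i, i] @ R) f" by (rule pds_perm[OF sm Sp_self]) simp
    finally show ?thesis by (simp add: pds_append G_def)
  qed
  have "pds R (lap f) = (\<lambda>x. \<Sum>i\<in>UNIV. pds R (pd i (pd i f)) x)"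
    unfolding lap_def by (rule pds_sum[OF sm]) (auto intro: Sp_pd Sp_self sm)
  then have lapR: "pds R (lap f) = (\<lambda>x. \<Sum>i\<in>UNIV. pd i (pd i G) x)" by (simp add: e1)
  have "pd j (pd j G) = (\<lambda>x. pds R (lap f) x - (\<Sum>i\<in>UNIV - {j}. pd i (pd i G) x))"
    unfolding lapR by (rule ext) (simp add: sum.remove[of UNIV j])
  moreover have "goodj h j (\<lambda>x. pds R (lap f) x - (\<Sum>i\<in>UNIV - {j}. pd i (pd i G) x))"
  proof (rule goodj_diff[OF IHl goodj_sum])
    fix i assume "i \<in> UNIV - {j}"
    then have ij: "i \<noteq> j" by simp
    show "goodj h j (pd i (pd i G))"
      by (rule goodj_tang[OF ij goodj_tang[OF ij IHf(1) Sp_Dl[OF sm GS]] Sp_Dl[OF sm Sp_pd[OF sm GS]]])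
  qed simp
  ultimately have "goodj h j (pd j (pd j G))" by simp
  then show ?case using IHf by (simp add: G_def R_def)
qed

lemma all_good:
  assumes f: "f \<in> CLh h"
  shows "goodj h j (pds js f)"
proof -
  have sm: "smooth_cube f" using CLhD[OF f] by blast
  define F where "F = filter (\<lambda>x. x \<noteq> j) js"
  define n where "n = length (filter (\<lambda>y. j = y) js)"
  have m: "mset js = mset (F @ replicate n j)"
    unfolding F_def n_def replicate_length_filter
    using multiset_partition[of "mset js" "\<lambda>x. x \<noteq> j"] by (simp add: eq_commute)
  have "pds js f = pds F (pds (replicate n j) f)"
    using pds_perm[OF sm Sp_self m] by (simp add: pds_append)
  moreover have "goodj h j (pds F (pds (replicate n j) f))"
    by (rule goodj_pds_tang[OF sm Sp_pds[OF sm Sp_self]]) (use rep_good[OF f] F_def in auto)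
  ultimately show ?thesis by simp
qed

lemma Sp_good:
  assumes f: "f \<in> CLh h" and g: "g \<in> Sp f"
  shows "goodj h j g"
  using g by induction (auto intro: goodj_zero goodj_add goodj_cmult all_good[OF f])

lemma Sp_Lh_bc:
  assumes f: "f \<in> CLh h" and g: "g \<in> Sp f"
  shows "Lh_bc h g"
  unfolding Lh_bc_good using Sp_good[OF f g] Sp_good[OF f Sp_pd[OF CLhD(2)[OF f] g]] by blast

lemma PDO_CLh:
  assumes f: "f \<in> CLh h"
  shows "PDO m a f \<in> CLh h"
proof -
  have sm: "smooth_cube f" using CLhD[OF f] by blast
  have P: "PDO m a f \<in> Sp f" by (rule Sp_PDO[OF sm Sp_self])
  show ?thesis
    unfolding CLh_def
    using Sp_outside[OF CLhD(1)[OF f] P] Sp_smooth[OF sm P] Sp_Lh_bc[OF f Sp_lap_pow[OF sm P]] by blast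
qed

definition lst :: "('n::finite \<Rightarrow> nat) \<Rightarrow> 'n list" where
  "lst \<alpha> = foldr (\<lambda>j l. replicate (\<alpha> j) j @ l) coord_list []"

lemma pd_pow_pds: "(pd j ^^ n) g = pds (replicate n j) g"
  by (induction n) simp_all

lemma foldr_pds: "foldr (\<lambda>j g. (pd j ^^ \<alpha> j) g) cs f = pds (foldr (\<lambda>j l. replicate (\<alpha> j) j @ l) cs []) f"
  by (induction cs) (simp_all add: pd_pow_pds pds_append)

lemma dpow_lst: "dpow \<alpha> f = pds (lst \<alpha>) f"
  unfolding dpow_def lst_def by (rule foldr_pds)

lemma length_foldr: "length (foldr (\<lambda>j l. replicate (\<alpha> j) j @ l) cs []) = sum_list (map \<alpha> cs)"
  by (induction cs) simp_all

lemma coord_list_prop: "distinct (coord_list :: 'n::finite list) \<and> set coord_list = (UNIV :: 'n set)"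
proof -
  have "\<exists>xs. distinct xs \<and> set xs = (UNIV :: 'n set)" using finite_distinct_list[of "UNIV :: 'n set"] by auto
  then show ?thesis unfolding coord_list_def by (rule someI_ex)
qed

lemma length_lst: "length (lst (\<alpha> :: 'n::finite \<Rightarrow> nat)) = (\<Sum>j\<in>UNIV. \<alpha> j)"
  unfolding lst_def length_foldr using coord_list_prop[where 'n='n]
  by (simp add: sum_list_distinct_conv_sum_set)

lemma pds_add:
  assumes "smooth_cube f" "smooth_cube g"
  shows "pds l (\<lambda>x. f x + g x) = (\<lambda>x. pds l f x + pds l g x)"
proof (induction l)
  case Nil then show ?case by simp
next
  case (Cons j l)
  have "Dl (pds l f)" "Dl (pds l g)" using assms by (auto simp: smooth_cube_iff)
  then show ?case using Cons by (simp add: pd_add)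
qed

lemma PDO_pds:
  assumes sm: "smooth_cube f"
  shows "pds js (PDO m a f) = (\<lambda>x. \<Sum>\<alpha>\<in>{\<alpha>. (\<Sum>j\<in>UNIV. \<alpha> j) \<le> m}. a \<alpha> * pds (js @ lst \<alpha>) f x)"
proof -
  have "pds js (PDO m a f) = (\<lambda>x. \<Sum>\<alpha>\<in>{\<alpha>. (\<Sum>j\<in>UNIV. \<alpha> j) \<le> m}. pds js (\<lambda>x. a \<alpha> * dpow \<alpha> f x) x)"
    unfolding PDO_def by (rule pds_sum[OF sm finite_multi]) (auto intro: Sp.sp_cmult Sp_dpow sm Sp_self)
  also have "\<dots> = (\<lambda>x. \<Sum>\<alpha>\<in>{\<alpha>. (\<Sum>j\<in>UNIV. \<alpha> j) \<le> m}. a \<alpha> * pds (js @ lst \<alpha>) f x)"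
    by (simp add: dpow_lst pds_cmult[OF sm Sp_pds[OF sm Sp_self]] pds_append)
  finally show ?thesis .
qed

lemma seminorm_bdd:
  assumes sm: "smooth_cube f"
  shows "bdd_above {norm (pds js f x) | js x. length js \<le> k \<and> x \<in> cbox 0 1}"
proof -
  let ?L = "{js :: 'a list. set js \<subseteq> UNIV \<and> length js \<le> k}"
  have fin: "finite ?L" by (rule finite_lists_length_le) simp
  have "\<exists>B>0. \<forall>x\<in>cbox 0 1. norm (pds js f x) \<le> B" for js
  proof -
    have "compact (pds js f ` cbox 0 1)"
      using sm by (intro compact_continuous_image) (auto simp: smooth_cube_iff)
    then have "bounded (pds js f ` cbox 0 1)" by (rule compact_imp_bounded)
    then show ?thesis by (auto simp: bounded_pos)
  qed
  then obtain B where B: "\<And>js. B js > 0" "\<And>js x. x \<in> cbox 0 1 \<Longrightarrow> norm (pds js f x) \<le> B js"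
    by metis
  show ?thesis
  proof (rule bdd_aboveI)
    fix y assume "y \<in> {norm (pds js f x) | js x. length js \<le> k \<and> x \<in> cbox 0 1}"
    then obtain js x where y: "y = norm (pds js f x)" "length js \<le> k" "x \<in> cbox 0 1" by blast
    have "y \<le> B js" using B(2)[OF y(3)] y(1) by simp
    also have "\<dots> \<le> sum B ?L" by (rule member_le_sum) (use y B(1) fin less_imp_le in auto)
    finally show "y \<le> sum B ?L" .
  qed
qed

lemma seminorm_upper:
  assumes sm: "smooth_cube f" and "length js \<le> k" "x \<in> cbox 0 1"
  shows "norm (pds js f x) \<le> seminorm_k k f"
  unfolding seminorm_k_def by (rule cSup_upper[OF _ seminorm_bdd[OF sm]]) (use assms in blast)

lemma PDO_seminorm:
  assumes sm: "smooth_cube f"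
  shows "seminorm_k k (PDO m a f) \<le> (\<Sum>\<alpha>\<in>{\<alpha>. (\<Sum>j\<in>UNIV. \<alpha> j) \<le> m}. norm (a \<alpha>)) * seminorm_k (k + m) f"
  unfolding seminorm_k_def[of k]
proof (rule cSup_least)
  show "{norm (pds js (PDO m a f) x) | js x. length js \<le> k \<and> x \<in> cbox 0 1} \<noteq> {}"
  proof -
    have "(0::real^'a) \<in> cbox 0 1" by (simp add: mem_box_cart)
    then have "norm (pds [] (PDO m a f) 0) \<in> {norm (pds js (PDO m a f) x) | js x. length js \<le> k \<and> x \<in> cbox 0 1}"
      unfolding mem_Collect_eq by (intro exI[of _ "[]"] exI[of _ "0::real^'a"]) simp
    then show ?thesis by blast
  qed
next
  fix y assume "y \<in> {norm (pds js (PDO m a f) x) | js x. length js \<le> k \<and> x \<in> cbox 0 1}"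
  then obtain js x where y: "y = norm (pds js (PDO m a f) x)" "length js \<le> k" "x \<in> cbox 0 1" by blast
  let ?A = "{\<alpha>::'a \<Rightarrow> nat. (\<Sum>j\<in>UNIV. \<alpha> j) \<le> m}"
  have "y = norm (\<Sum>\<alpha>\<in>?A. a \<alpha> * pds (js @ lst \<alpha>) f x)" using y(1) by (simp add: PDO_pds[OF sm])
  also have "\<dots> \<le> (\<Sum>\<alpha>\<in>?A. norm (a \<alpha> * pds (js @ lst \<alpha>) f x))" by (rule norm_sum)
  also have "\<dots> \<le> (\<Sum>\<alpha>\<in>?A. norm (a \<alpha>) * seminorm_k (k + m) f)"
  proof (rule sum_mono)
    fix \<alpha> assume "\<alpha> \<in> ?A"
    then have "length (js @ lst \<alpha>) \<le> k + m" using y(2) by (simp add: length_lst)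
    then have "norm (pds (js @ lst \<alpha>) f x) \<le> seminorm_k (k + m) f" by (rule seminorm_upper[OF sm _ y(3)])
    then show "norm (a \<alpha> * pds (js @ lst \<alpha>) f x) \<le> norm (a \<alpha>) * seminorm_k (k + m) f"
      by (simp add: norm_mult mult_left_mono)
  qed
  finally show "y \<le> (\<Sum>\<alpha>\<in>?A. norm (a \<alpha>)) * seminorm_k (k + m) f" by (simp add: sum_distrib_right)
qed

definition hi :: "'n::finite \<Rightarrow> real \<Rightarrow> real^'n" where "hi j c = (\<chi> k. if k = j then c else 1)"
definition lo :: "'n::finite \<Rightarrow> real \<Rightarrow> real^'n" where "lo j c = (\<chi> k. if k = j then c else 0)"

lemma split_le: "0 \<le> c \<Longrightarrow> c \<le> 1 \<Longrightarrow> cbox 0 1 \<inter> {x. x \<bullet> axis j 1 \<le> c} = cbox 0 (hi j c :: real^'n::finite)"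
  by (auto simp: mem_box_cart inner_axis hi_def) (smt (verit))+

lemma split_ge: "0 \<le> c \<Longrightarrow> c \<le> 1 \<Longrightarrow> cbox 0 1 \<inter> {x. x \<bullet> axis j 1 \<ge> c} = cbox (lo j c) (1 :: real^'n::finite)"
  by (auto simp: mem_box_cart inner_axis lo_def) (smt (verit))+

lemma int_split:
  fixes F :: "real^'n::finite \<Rightarrow> complex"
  assumes "continuous_on (cbox 0 1) F" "0 \<le> c" "c \<le> 1"
  shows "integral (cbox 0 1) F = integral (cbox 0 (hi j c)) F + integral (cbox (lo j c) 1) F"
proof -
  have "axis j 1 \<in> (Basis :: (real^'n) set)" by (simp add: Basis_vec_def) blast
  moreover have "cbox 0 1 \<inter> {x. x \<bullet> axis j 1 \<le> c} = cbox 0 (hi j c :: real^'n)" by (rule split_le[OF assms(2,3)])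
  moreover have "cbox 0 1 \<inter> {x. x \<bullet> axis j 1 \<ge> c} = cbox (lo j c) (1 :: real^'n)" by (rule split_ge[OF assms(2,3)])
  ultimately show ?thesis
    using integral_split[OF integrable_continuous[OF assms(1)], of "axis j 1" c] by simp
qed

lemma line_mv:
  fixes F F' :: "real^'n::finite \<Rightarrow> complex"
  assumes LD: "\<And>y r. y \<in> cbox 0 1 \<Longrightarrow> r \<in> {-(y$j)..1-y$j} \<Longrightarrow>
      ((\<lambda>t. F (y + t *\<^sub>R axis j 1)) has_vector_derivative F' (y + r *\<^sub>R axis j 1)) (at r within {-(y$j)..1-y$j})"
    and y: "y \<in> cbox 0 1" and y1: "y + t1 *\<^sub>R axis j 1 \<in> cbox 0 1"
    and B: "\<And>u. u \<in> closed_segment 0 t1 \<Longrightarrow> y + u *\<^sub>R axis j 1 \<in> cbox 0 1 \<Longrightarrow> norm (F' (y + u *\<^sub>R axis j 1) - K) \<le> Bd"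
  shows "norm (F (y + t1 *\<^sub>R axis j 1) - F y - t1 *\<^sub>R K) \<le> Bd * \<bar>t1\<bar>"
proof -
  have sub: "closed_segment 0 t1 \<subseteq> {-(y$j)..1-y$j}"
    by (rule closed_segment_subset) (use cube_coord[OF y, of j] in_line_int[OF y y1] in auto)
  have inC: "y + u *\<^sub>R axis j 1 \<in> cbox 0 1" if "u \<in> closed_segment 0 t1" for u
    using sub that line_set[OF y, of j] by auto
  let ?\<phi> = "\<lambda>t. F (y + t *\<^sub>R axis j 1) - t *\<^sub>R K"
  have "norm (?\<phi> t1 - ?\<phi> 0) \<le> Bd * \<bar>t1\<bar>"
  proof (rule mvt_bound)
    fix u assume u: "u \<in> closed_segment 0 t1"
    have "((\<lambda>t. F (y + t *\<^sub>R axis j 1)) has_vector_derivative F' (y + u *\<^sub>R axis j 1)) (at u within closed_segment 0 t1)"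
      by (rule has_vector_derivative_within_subset[OF LD[OF y] sub]) (use sub u in blast)
    then show "(?\<phi> has_vector_derivative (F' (y + u *\<^sub>R axis j 1) - K)) (at u within closed_segment 0 t1)"
      by (auto intro!: derivative_eq_intros)
    show "norm (F' (y + u *\<^sub>R axis j 1) - K) \<le> Bd" by (rule B[OF u inC[OF u]])
  qed
  then show ?thesis by (simp add: algebra_simps)
qed

lemma shift_int:
  fixes F :: "real^'n::finite \<Rightarrow> complex"
  assumes "F integrable_on cbox (a + c) (b + c)"
  shows "((\<lambda>x. F (c + x)) has_integral integral (cbox (a + c) (b + c)) F) (cbox a b)"
  using has_integral_shift_cbox_iff[of F c "integral (cbox (a + c) (b + c)) F" a b] assms
  by (simp add: o_def has_integral_integral)

lemma box_sub:
  assumes "\<And>i. 0 \<le> (a::real^'n::finite)$i" "\<And>i. b$i \<le> 1"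
  shows "cbox a b \<subseteq> cbox 0 (1::real^'n)"
  unfolding subset_iff mem_box_cart using assms by (simp, meson order_trans)

lemma zero_int:
  fixes F F' :: "real^'n::finite \<Rightarrow> complex"
  assumes cF: "continuous_on (cbox 0 1) F" and cF': "continuous_on (cbox 0 1) F'"
    and LD: "\<And>y r. y \<in> cbox 0 1 \<Longrightarrow> r \<in> {-(y$j)..1-y$j} \<Longrightarrow>
      ((\<lambda>t. F (y + t *\<^sub>R axis j 1)) has_vector_derivative F' (y + r *\<^sub>R axis j 1)) (at r within {-(y$j)..1-y$j})"
    and per: "\<And>x. x \<in> cbox 0 1 \<Longrightarrow> x$j = 0 \<Longrightarrow> F (x + axis j 1) = F x"
  shows "integral (cbox 0 1) F' = 0"
proof -
  let ?e = "axis j 1 :: real^'n"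
  let ?C = "cbox 0 (1::real^'n)"
  obtain M where M: "M > 0" "\<And>x. x \<in> ?C \<Longrightarrow> norm (F' x) \<le> M"
  proof -
    have "bounded (F' ` ?C)" by (rule compact_imp_bounded[OF compact_continuous_image[OF cF']]) simp
    then show ?thesis using that by (auto simp: bounded_pos)
  qed
  have uc: "uniformly_continuous_on ?C F'" by (rule compact_uniformly_continuous[OF cF']) simp
  have small: "norm (integral ?C F') \<le> \<eta>" if \<eta>: "\<eta> > 0" for \<eta>
  proof -
    define \<epsilon> where "\<epsilon> = \<eta> / 2"
    have \<epsilon>: "\<epsilon> > 0" using \<eta> by (simp add: \<epsilon>_def)
    obtain \<delta> where \<delta>: "\<delta> > 0" "\<And>x x'. x \<in> ?C \<Longrightarrow> x' \<in> ?C \<Longrightarrow> dist x' x < \<delta> \<Longrightarrow> dist (F' x') (F' x) < \<epsilon>"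
      using uc \<epsilon> unfolding uniformly_continuous_on_def by metis
    define s where "s = min (1/2) (min (\<delta>/2) (\<eta> / (6 * (M + 1))))"
    have s12: "s \<le> 1/2" unfolding s_def by (rule min.cobounded1)
    have "s \<le> \<delta>/2" unfolding s_def by linarith
    then have s: "s > 0" "s \<le> 1/2" "s < \<delta>" using \<delta> \<eta> M s12 by (auto simp: s_def)
    have s3: "3 * M * s \<le> \<eta> / 2"
    proof -
      have "s \<le> \<eta> / (6 * (M + 1))" by (simp add: s_def)
      then have "3 * M * s \<le> 3 * M * (\<eta> / (6 * (M + 1)))" using M by (intro mult_left_mono) auto
      also have "\<dots> = (\<eta> / 2) * (M / (M + 1))" using M by (simp add: field_simps)
      also have "\<dots> \<le> (\<eta> / 2) * 1" using M \<eta> by (intro mult_left_mono) auto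
      finally show ?thesis by simp
    qed
    define A where "A = cbox 0 (hi j (1 - s))"
    define B where "B = cbox (lo j (1 - s)) (1::real^'n)"
    define A2 where "A2 = cbox (lo j s) (1::real^'n)"
    define B2 where "B2 = cbox 0 (hi j s)"
    have AC: "A \<subseteq> ?C" "B \<subseteq> ?C" "A2 \<subseteq> ?C" "B2 \<subseteq> ?C" unfolding A_def B_def A2_def B2_def
      by (rule box_sub; use s in \<open>simp add: hi_def lo_def\<close>)+
    have intF: "F integrable_on S" if "S \<subseteq> ?C" "S \<in> {A, B, A2, B2}" for S
      using that by (auto simp: A_def B_def A2_def B2_def intro!: integrable_continuous continuous_on_subset[OF cF])
    have intF': "F' integrable_on S" if "S \<subseteq> ?C" "S \<in> {A, B, A2, B2}" for S
      using that by (auto simp: A_def B_def A2_def B2_def intro!: integrable_continuous continuous_on_subset[OF cF'])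
    have sp1: "integral ?C F = integral A F + integral B F"
      unfolding A_def B_def by (rule int_split[OF cF]) (use s in auto)
    have sp2: "integral ?C F = integral B2 F + integral A2 F"
      unfolding A2_def B2_def by (rule int_split[OF cF]) (use s in auto)
    have sp3: "integral ?C F' = integral A F' + integral B F'"
      unfolding A_def B_def by (rule int_split[OF cF']) (use s in auto)
    have tA: "((\<lambda>x. F (s *\<^sub>R ?e + x)) has_integral integral A2 F) A"
    proof -
      have e1: "0 + s *\<^sub>R ?e = lo j s" "hi j (1 - s) + s *\<^sub>R ?e = 1"
        by (auto simp: vec_eq_iff lo_def hi_def axis_def)
      show ?thesis using shift_int[of F 0 "s *\<^sub>R ?e" "hi j (1 - s)"] intF[of A2] AC
        unfolding A_def A2_def e1 by simp
    qed
    have tB: "((\<lambda>x. F ((s - 1) *\<^sub>R ?e + x)) has_integral integral B2 F) B"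
    proof -
      have e1: "lo j (1 - s) + (s - 1) *\<^sub>R ?e = 0" "1 + (s - 1) *\<^sub>R ?e = hi j s"
        by (auto simp: vec_eq_iff lo_def hi_def axis_def)
      show ?thesis using shift_int[of F "lo j (1 - s)" "(s - 1) *\<^sub>R ?e" 1] intF[of B2] AC
        unfolding B_def B2_def e1 by simp
    qed
    define gA where "gA = (\<lambda>x. s *\<^sub>R F' x - (F (s *\<^sub>R ?e + x) - F x))"
    define gB where "gB = (\<lambda>x. s *\<^sub>R F' x - (F ((s - 1) *\<^sub>R ?e + x) - F x))"
    have hA: "(gA has_integral (s *\<^sub>R integral A F' - (integral A2 F - integral A F))) A"
      unfolding gA_def
      by (intro has_integral_diff has_integral_cmul tA) (use intF intF' AC in \<open>auto simp: has_integral_integral[symmetric]\<close>)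
    have hB: "(gB has_integral (s *\<^sub>R integral B F' - (integral B2 F - integral B F))) B"
      unfolding gB_def
      by (intro has_integral_diff has_integral_cmul tB) (use intF intF' AC in \<open>auto simp: has_integral_integral[symmetric]\<close>)
    have sumeq: "(s *\<^sub>R integral A F' - (integral A2 F - integral A F)) + (s *\<^sub>R integral B F' - (integral B2 F - integral B F))
        = s *\<^sub>R integral ?C F'"
      using sp1 sp2 sp3 by (simp add: algebra_simps)
    have bA: "norm (gA x) \<le> \<epsilon> * s" if x: "x \<in> A" for x
    proof -
      have xC: "x \<in> ?C" using x AC by blast
      have xs: "x + s *\<^sub>R ?e \<in> ?C" using x s
        by (auto simp: A_def mem_box_cart hi_def axis_def) (smt (verit))+
      have "norm (F (x + s *\<^sub>R ?e) - F x - s *\<^sub>R F' x) \<le> \<epsilon> * \<bar>s\<bar>"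
      proof (rule line_mv[OF LD xC xs])
        fix u assume u: "u \<in> closed_segment 0 s" and xu: "x + u *\<^sub>R ?e \<in> ?C"
        have "\<bar>u\<bar> \<le> s" using u s by (auto simp: closed_segment_eq_real_ivl)
        then have "dist (x + u *\<^sub>R ?e) x < \<delta>" using s by (simp add: dist_norm)
        then show "norm (F' (x + u *\<^sub>R ?e) - F' x) \<le> \<epsilon>"
          using \<delta>(2)[OF xC xu] by (simp add: dist_norm)
      qed auto
      then show ?thesis using s by (simp add: gA_def norm_minus_commute algebra_simps)
    qed
    have bB: "norm (gB x) \<le> 3 * M * s" if x: "x \<in> B" for x
    proof -
      have xC: "x \<in> ?C" using x AC by blast
      have xj: "1 - s \<le> x$j" "x$j \<le> 1" using x by (auto simp: B_def mem_box_cart lo_def dest: spec[of _ j])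
      define x0 where "x0 = x - (x$j) *\<^sub>R ?e"
      have x0C: "x0 \<in> ?C" and x0j: "x0$j = 0" using xC by (auto simp: x0_def mem_box_cart axis_def)
      have e1: "(s - 1) *\<^sub>R ?e + x = x0 + (x$j + s - 1) *\<^sub>R ?e"
        by (simp add: x0_def vec_eq_iff axis_def algebra_simps)
      have e2: "x + (1 - x$j) *\<^sub>R ?e = x0 + ?e"
        by (simp add: x0_def vec_eq_iff axis_def algebra_simps)
      have y1C: "x0 + (x$j + s - 1) *\<^sub>R ?e \<in> ?C"
        using x0C x0j xj s unfolding mem_box_cart by (auto simp: axis_def)
      have y2C: "x + (1 - x$j) *\<^sub>R ?e \<in> ?C"
        unfolding e2 using x0C x0j unfolding mem_box_cart by (auto simp: axis_def)
      have n1: "norm (F (x0 + (x$j + s - 1) *\<^sub>R ?e) - F x0 - (x$j + s - 1) *\<^sub>R 0) \<le> M * \<bar>x$j + s - 1\<bar>"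
        by (rule line_mv[OF LD x0C y1C]) (use M in auto)
      have n2: "norm (F (x + (1 - x$j) *\<^sub>R ?e) - F x - (1 - x$j) *\<^sub>R 0) \<le> M * \<bar>1 - x$j\<bar>"
        by (rule line_mv[OF LD xC y2C]) (use M in auto)
      have a1: "\<bar>x$j + s - 1\<bar> \<le> s" "\<bar>1 - x$j\<bar> \<le> s" using xj s by auto
      have n1': "norm (F ((s - 1) *\<^sub>R ?e + x) - F x0) \<le> M * s"
        using n1 a1 M unfolding e1 by (smt (verit) mult_left_mono scale_zero_right diff_zero)
      have n2': "norm (F x0 - F x) \<le> M * s"
        using n2 a1 M unfolding e2 per[OF x0C x0j] by (smt (verit) mult_left_mono scale_zero_right diff_zero)
      have "norm (F ((s - 1) *\<^sub>R ?e + x) - F x) \<le> norm (F ((s - 1) *\<^sub>R ?e + x) - F x0) + norm (F x0 - F x)"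
        by (rule order_trans[OF _ norm_triangle_ineq]) simp
      also have "\<dots> \<le> 2 * M * s" using n1' n2' by simp
      finally have n3: "norm (F ((s - 1) *\<^sub>R ?e + x) - F x) \<le> 2 * M * s" .
      have n4: "norm (s *\<^sub>R F' x) \<le> s * M" using M(2)[OF xC] s by (simp add: mult_left_mono)
      have "norm (gB x) \<le> norm (s *\<^sub>R F' x) + norm (F ((s - 1) *\<^sub>R ?e + x) - F x)"
        unfolding gB_def by (rule norm_triangle_ineq4)
      also have "\<dots> \<le> s * M + 2 * M * s" by (rule add_mono[OF n4 n3])
      also have "\<dots> = 3 * M * s" by (simp add: algebra_simps)
      finally show ?thesis .
    qed
    have cA: "Henstock_Kurzweil_Integration.content A \<le> 1"
    proof -
      have "Henstock_Kurzweil_Integration.content A = (\<Prod>k\<in>UNIV. (hi j (1 - s) :: real^'n)$k - (0::real^'n)$k)"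
      proof (unfold A_def, rule content_cbox_cart)
        have "(0::real^'n) \<in> cbox 0 (hi j (1 - s))" using s by (simp add: mem_box_cart hi_def)
        then show "cbox 0 (hi j (1 - s)) \<noteq> {}" by blast
      qed
      also have "\<dots> = 1 - s" by (simp add: hi_def prod.If_cases)
      finally show ?thesis using s by simp
    qed
    have cB: "Henstock_Kurzweil_Integration.content B = s"
    proof -
      have "Henstock_Kurzweil_Integration.content B = (\<Prod>k\<in>UNIV. (1::real^'n)$k - (lo j (1 - s))$k)"
      proof (unfold B_def, rule content_cbox_cart)
        have "lo j (1 - s) \<in> cbox (lo j (1 - s)) (1::real^'n)" using s by (simp add: mem_box_cart lo_def)
        then show "cbox (lo j (1 - s)) (1::real^'n) \<noteq> {}" by blast
      qed
      also have "\<dots> = (\<Prod>k\<in>UNIV. if k = j then s else 1)" by (rule prod.cong) (auto simp: lo_def)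
      also have "\<dots> = s" by simp
      finally show ?thesis .
    qed
    have IA: "norm (s *\<^sub>R integral A F' - (integral A2 F - integral A F)) \<le> (\<epsilon> * s) * Henstock_Kurzweil_Integration.content A"
      unfolding A_def by (rule has_integral_bound[OF _ hA[unfolded A_def]]) (use \<epsilon> s bA in \<open>auto simp: A_def\<close>)
    have IB: "norm (s *\<^sub>R integral B F' - (integral B2 F - integral B F)) \<le> (3 * M * s) * Henstock_Kurzweil_Integration.content B"
      unfolding B_def by (rule has_integral_bound[OF _ hB[unfolded B_def]]) (use M s bB in \<open>auto simp: B_def\<close>)
    have "s * norm (integral ?C F') = norm (s *\<^sub>R integral ?C F')" using s by simp
    also have "\<dots> \<le> norm (s *\<^sub>R integral A F' - (integral A2 F - integral A F)) + norm (s *\<^sub>R integral B F' - (integral B2 F - integral B F))"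
      unfolding sumeq[symmetric] by (rule norm_triangle_ineq)
    also have "\<dots> \<le> \<epsilon> * s + 3 * M * s * s"
    proof -
      have "(\<epsilon> * s) * Henstock_Kurzweil_Integration.content A \<le> \<epsilon> * s" using cA \<epsilon> s
        by (metis content_pos_le less_eq_real_def mult_left_le mult_nonneg_nonneg)
      then show ?thesis using IA IB cB by simp
    qed
    also have "\<dots> = s * (\<epsilon> + 3 * M * s)" by (simp add: algebra_simps)
    finally have "norm (integral ?C F') \<le> \<epsilon> + 3 * M * s" using s by simp
    then show ?thesis using s3 by (simp add: \<epsilon>_def)
  qed
  have "norm (integral ?C F') \<le> 0"
  proof (rule field_le_epsilon)
    fix e :: real assume "0 < e" then show "norm (integral ?C F') \<le> 0 + e" using small by simp
  qed
  then show ?thesis by simp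
qed

definition W :: "real^'n::finite \<Rightarrow> int^'n \<Rightarrow> real^'n \<Rightarrow> complex" where
  "W h \<xi> x = cnj (v_Lh h \<xi> x)"

definition mu :: "real^'n::finite \<Rightarrow> int^'n \<Rightarrow> 'n \<Rightarrow> complex" where
  "mu h \<xi> j = complex_of_real (ln (h$j)) + complex_of_real (2 * pi * of_int (\<xi>$j)) * \<i>"

lemma hpow_shift:
  fixes h :: "real^'n::finite"
  shows "hpow h (- (x + t *\<^sub>R axis j 1)) = hpow h (- x) * (h$j) powr (- t)"
proof -
  have "hpow h (- (x + t *\<^sub>R axis j 1)) = (\<Prod>k\<in>UNIV. (h$k) powr (- x$k) * (if k = j then (h$j) powr (- t) else 1))"
    unfolding hpow_def by (rule prod.cong) (auto simp: axis_def powr_add[symmetric])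
  also have "\<dots> = hpow h (- x) * (\<Prod>k\<in>UNIV. if k = j then (h$j) powr (- t) else 1)"
    by (simp add: prod.distrib hpow_def)
  also have "\<dots> = hpow h (- x) * (h$j) powr (- t)" by simp
  finally show ?thesis .
qed

lemma sum_shift:
  fixes \<xi> :: "int^'n::finite"
  shows "(\<Sum>k\<in>UNIV. of_int (\<xi>$k) * (x + t *\<^sub>R axis j 1)$k) = (\<Sum>k\<in>UNIV. of_int (\<xi>$k) * x$k) + of_int (\<xi>$j) * t"
proof -
  have "(\<Sum>k\<in>UNIV. of_int (\<xi>$k) * (x + t *\<^sub>R axis j 1)$k) = (\<Sum>k\<in>UNIV. of_int (\<xi>$k) * x$k + (if k = j then of_int (\<xi>$j) * t else 0))"
    by (rule sum.cong) (auto simp: axis_def algebra_simps)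
  also have "\<dots> = (\<Sum>k\<in>UNIV. of_int (\<xi>$k) * x$k) + of_int (\<xi>$j) * t"
    by (simp add: sum.distrib)
  finally show ?thesis .
qed

lemma exp_mu:
  assumes "h$j > 0"
  shows "exp (- mu h \<xi> j * complex_of_real t) = complex_of_real ((h$j) powr (- t)) * cis (- (2 * pi * (of_int (\<xi>$j) * t)))"
proof -
  have eq: "- mu h \<xi> j * complex_of_real t = complex_of_real (- t * ln (h$j)) + \<i> * complex_of_real (- (2 * pi * (of_int (\<xi>$j) * t)))"
    by (simp add: mu_def algebra_simps)
  have "exp (- mu h \<xi> j * complex_of_real t) = exp (complex_of_real (- t * ln (h$j))) * exp (\<i> * complex_of_real (- (2 * pi * (of_int (\<xi>$j) * t))))"
    by (subst eq) (rule exp_add)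
  also have "\<dots> = complex_of_real ((h$j) powr (- t)) * cis (- (2 * pi * (of_int (\<xi>$j) * t)))"
  proof -
    have a: "exp (complex_of_real (- t * ln (h$j))) = complex_of_real ((h$j) powr (- t))"
      using assms by (simp only: exp_of_real) (simp add: powr_def)
    have b: "exp (\<i> * complex_of_real (- (2 * pi * (of_int (\<xi>$j) * t)))) = cis (- (2 * pi * (of_int (\<xi>$j) * t)))"
      by (simp only: cis_conv_exp)
    show ?thesis by (simp only: a b)
  qed
  finally show ?thesis .
qed

lemma W_shift:
  assumes "h$j > 0"
  shows "W h \<xi> (x + t *\<^sub>R axis j 1) = W h \<xi> x * exp (- mu h \<xi> j * complex_of_real t)"
  unfolding exp_mu[OF assms] W_def v_Lh_def hpow_shift sum_shift
  by (simp add: cis_cnj distrib_left cis_mult[symmetric] algebra_simps)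

lemma W_per:
  assumes "h$j > 0"
  shows "W h \<xi> (x + axis j 1) = W h \<xi> x / complex_of_real (h$j)"
proof -
  have c: "cis (- (2 * pi * (of_int (\<xi>$j) * 1))) = 1"
  proof -
    have "- (2 * pi * (of_int (\<xi>$j) * 1)) = 2 * pi * of_int (- \<xi>$j)" by simp
    then show ?thesis by (simp only:) (rule cis_multiple_2pi, simp)
  qed
  have "W h \<xi> (x + axis j 1) = W h \<xi> (x + 1 *\<^sub>R axis j 1)" by simp
  also have "\<dots> = W h \<xi> x * (complex_of_real ((h$j) powr (- 1)))"
    unfolding W_shift[OF assms] exp_mu[OF assms] c by simp
  also have "\<dots> = W h \<xi> x / complex_of_real (h$j)" using assms by (simp add: powr_neg_one divide_inverse)
  finally show ?thesis .
qed

lemma W_cont: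
  assumes "\<forall>k. h$k > 0"
  shows "continuous_on S (W h \<xi>)"
proof -
  have hne: "\<And>k. h$k \<noteq> 0" using assms by (metis less_irrefl)
  show ?thesis unfolding W_def v_Lh_def hpow_def using hne
    by (intro continuous_intros) auto
qed

lemma W_line:
  assumes "h$j > 0"
  shows "((\<lambda>t. W h \<xi> (y + t *\<^sub>R axis j 1)) has_vector_derivative (- mu h \<xi> j * W h \<xi> (y + r *\<^sub>R axis j 1))) (at r within S)"
proof -
  have e: "(\<lambda>t. W h \<xi> (y + t *\<^sub>R axis j 1)) = (\<lambda>t. (\<lambda>z. W h \<xi> y * exp (- mu h \<xi> j * z)) (complex_of_real t))"
    by (rule ext) (simp add: W_shift[OF assms])
  have "((\<lambda>z. W h \<xi> y * exp (- mu h \<xi> j * z)) has_field_derivative (W h \<xi> y * (exp (- mu h \<xi> j * complex_of_real r) * (- mu h \<xi> j))))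
          (at (complex_of_real r))"
    by (auto intro!: derivative_eq_intros)
  then have "((\<lambda>t. W h \<xi> (y + t *\<^sub>R axis j 1)) has_vector_derivative (W h \<xi> y * (exp (- mu h \<xi> j * complex_of_real r) * (- mu h \<xi> j)))) (at r within S)"
    unfolding e by (rule has_vector_derivative_real_field)
  then show ?thesis by (simp add: W_shift[OF assms] algebra_simps)
qed

lemma FT_cbox: "FT_Lh h g \<xi> = integral (cbox 0 1) (\<lambda>x. g x * W h \<xi> x)"
  unfolding FT_Lh_def W_def by (rule integral_open_interval)

lemma FT_pd:
  fixes G :: "real^'n::finite \<Rightarrow> complex"
  assumes hpos: "\<forall>k. h$k > 0"
    and cG: "continuous_on (cbox 0 1) G" and cG': "continuous_on (cbox 0 1) (pd j G)"
    and D: "Dl G" and good: "goodj h j G"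
  shows "FT_Lh h (pd j G) \<xi> = mu h \<xi> j * FT_Lh h G \<xi>"
proof -
  have hj: "h$j > 0" using hpos by blast
  let ?F = "\<lambda>x. G x * W h \<xi> x"
  let ?F' = "\<lambda>x. pd j G x * W h \<xi> x - mu h \<xi> j * (G x * W h \<xi> x)"
  have cW: "continuous_on (cbox 0 1) (W h \<xi>)" by (rule W_cont[OF hpos])
  have c1: "continuous_on (cbox 0 1) ?F" using cG cW by (intro continuous_intros)
  have c2: "continuous_on (cbox 0 1) (\<lambda>x. pd j G x * W h \<xi> x)" using cG' cW by (intro continuous_intros)
  have c3: "continuous_on (cbox 0 1) ?F'" by (intro continuous_intros cG cG' cW)
  have "integral (cbox 0 1) ?F' = 0"
  proof (rule zero_int[OF c1 c3])
    fix y :: "real^'n" and r assume y: "y \<in> cbox 0 1" and r: "r \<in> {-(y$j)..1-y$j}"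
    have d1: "((\<lambda>t. G (y + t *\<^sub>R axis j 1)) has_vector_derivative pd j G (y + r *\<^sub>R axis j 1)) (at r within {-(y$j)..1-y$j})"
      by (rule line_deriv[OF D y r])
    have d2: "((\<lambda>t. W h \<xi> (y + t *\<^sub>R axis j 1)) has_vector_derivative (- mu h \<xi> j * W h \<xi> (y + r *\<^sub>R axis j 1))) (at r within {-(y$j)..1-y$j})"
      by (rule W_line[OF hj])
    show "((\<lambda>t. ?F (y + t *\<^sub>R axis j 1)) has_vector_derivative ?F' (y + r *\<^sub>R axis j 1)) (at r within {-(y$j)..1-y$j})"
      using has_vector_derivative_mult[OF d1 d2] by (simp add: algebra_simps)
  next
    fix x :: "real^'n" assume x: "x \<in> cbox 0 1" and xj: "x$j = 0"
    have "G (x + axis j 1) = complex_of_real (h$j) * G x" using good x xj unfolding goodj_def by simp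
    then show "?F (x + axis j 1) = ?F x" using hj by (simp add: W_per[OF hj])
  qed
  moreover have "integral (cbox 0 1) ?F' = integral (cbox 0 1) (\<lambda>x. pd j G x * W h \<xi> x) - mu h \<xi> j * integral (cbox 0 1) ?F"
  proof -
    have i1: "(\<lambda>x. pd j G x * W h \<xi> x) integrable_on cbox 0 1" by (rule integrable_continuous[OF c2])
    have i2: "(\<lambda>x. mu h \<xi> j * (G x * W h \<xi> x)) integrable_on cbox 0 1"
      by (rule integrable_on_mult_right[OF integrable_continuous[OF c1]])
    show ?thesis using integral_diff[OF i1 i2] by (simp add: integral_mult_right)
  qed
  ultimately show ?thesis unfolding FT_cbox by simp
qed

lemma FT_pds:
  assumes hpos: "\<forall>k. h$k > 0" and f: "f \<in> CLh h"
  shows "FT_Lh h (pds l f) \<xi> = prod_list (map (mu h \<xi>) l) * FT_Lh h f \<xi>"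
proof (induction l)
  case Nil then show ?case by simp
next
  case (Cons k l)
  have sm: "smooth_cube f" using CLhD[OF f] by blast
  have S: "pds l f \<in> Sp f" by (rule Sp_pds[OF sm Sp_self])
  have "FT_Lh h (pds (k # l) f) \<xi> = mu h \<xi> k * FT_Lh h (pds l f) \<xi>"
    unfolding pds_Cons
    by (rule FT_pd[OF hpos Sp_cont[OF sm S] Sp_cont[OF sm Sp_pd[OF sm S]] Sp_Dl[OF sm S] all_good[OF f]])
  then show ?case using Cons by simp
qed

lemma FT_PDO:
  assumes hpos: "\<forall>k. h$k > 0" and f: "f \<in> CLh h"
  shows "FT_Lh h (PDO m a f) \<xi> = (\<Sum>\<alpha>\<in>{\<alpha>. (\<Sum>j\<in>UNIV. \<alpha> j) \<le> m}. a \<alpha> * prod_list (map (mu h \<xi>) (lst \<alpha>))) * FT_Lh h f \<xi>"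
proof -
  have sm: "smooth_cube f" using CLhD[OF f] by blast
  let ?A = "{\<alpha>::'a \<Rightarrow> nat. (\<Sum>j\<in>UNIV. \<alpha> j) \<le> m}"
  have cW: "continuous_on (cbox 0 1) (W h \<xi>)" by (rule W_cont[OF hpos])
  have ci: "(\<lambda>x. pds (lst \<alpha>) f x * W h \<xi> x) integrable_on cbox 0 1" for \<alpha>
    by (rule integrable_continuous) (intro continuous_intros cW Sp_cont[OF sm Sp_pds[OF sm Sp_self]])
  have "FT_Lh h (PDO m a f) \<xi> = integral (cbox 0 1) (\<lambda>x. \<Sum>\<alpha>\<in>?A. a \<alpha> * (pds (lst \<alpha>) f x * W h \<xi> x))"
    unfolding FT_cbox PDO_def dpow_lst by (simp add: sum_distrib_right mult.assoc)
  also have "\<dots> = (\<Sum>\<alpha>\<in>?A. integral (cbox 0 1) (\<lambda>x. a \<alpha> * (pds (lst \<alpha>) f x * W h \<xi> x)))"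
    by (rule integral_sum[OF finite_multi]) (intro integrable_on_mult_right ci)
  also have "\<dots> = (\<Sum>\<alpha>\<in>?A. a \<alpha> * FT_Lh h (pds (lst \<alpha>) f) \<xi>)"
    unfolding FT_cbox by (simp add: integral_mult_right)
  also have "\<dots> = (\<Sum>\<alpha>\<in>?A. a \<alpha> * prod_list (map (mu h \<xi>) (lst \<alpha>))) * FT_Lh h f \<xi>"
    by (simp add: FT_pds[OF hpos f] sum_distrib_right mult.assoc)
  finally show ?thesis .
qed

theorem proposition4p6:
  fixes m :: nat and a :: "('n::finite \<Rightarrow> nat) \<Rightarrow> complex" and h :: "real^'n"
  assumes "\<forall>j. h $ j > 0"
  shows "Lh_multiplier h (PDO m a)"
  unfolding Lh_multiplier_def
proof (intro conjI ballI allI)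
  fix f assume f: "f \<in> CLh h"
  show "PDO m a f \<in> CLh h" by (rule PDO_CLh[OF f])
next
  fix f g assume f: "f \<in> CLh h" and g: "g \<in> CLh h"
  have sf: "smooth_cube f" and sg: "smooth_cube g" using CLhD f g by blast+
  show "PDO m a (\<lambda>x. f x + g x) = (\<lambda>x. PDO m a f x + PDO m a g x)"
    unfolding PDO_def dpow_lst pds_add[OF sf sg] by (simp add: distrib_left sum.distrib)
next
  fix f c assume f: "f \<in> CLh h"
  have sf: "smooth_cube f" using CLhD f by blast
  show "PDO m a (\<lambda>x. c * f x) = (\<lambda>x. c * PDO m a f x)"
    unfolding PDO_def dpow_lst pds_cmult[OF sf Sp_self] by (simp add: sum_distrib_left mult.left_commute)
next
  fix k
  show "\<exists>k' C. \<forall>f\<in>CLh h. seminorm_k k (PDO m a f) \<le> C * seminorm_k k' f"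
    using PDO_seminorm CLhD(2) by blast
next
  show "\<exists>\<sigma>. \<forall>f\<in>CLh h. \<forall>\<xi>. FT_Lh h (PDO m a f) \<xi> = \<sigma> \<xi> * FT_Lh h f \<xi>"
  proof (intro exI ballI allI)
    fix f \<xi> assume f: "f \<in> CLh h"
    show "FT_Lh h (PDO m a f) \<xi> = (\<lambda>\<xi>. \<Sum>\<alpha>\<in>{\<alpha>. (\<Sum>j\<in>UNIV. \<alpha> j) \<le> m}. a \<alpha> * prod_list (map (mu h \<xi>) (lst \<alpha>))) \<xi> * FT_Lh h f \<xi>"
      using FT_PDO[OF assms f] by simp
  qed
qed

end
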